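(* For every $p\in\mathbb Z$ and every $\tau\in\{0,\dots,\beta(|p|)-1\}$, $$\|D_{p,\tau}\|_{L^2(I_{p,\tau})}=\Big(\int_{I_{p,\tau}}|D_{p,\tau}(t)|^2\,dt\Big)^{1/2}>0.85,$$ where $I_{p,\tau}=\Big[\frac{\tau}{\beta(|p|)}-\frac{1}{2\beta(|p|)},\ \frac{\tau}{\beta(|p|)}+\frac{1}{2\beta(|p|)}\Big]$, understood as an interval on the circle $\mathbb R/\mathbb Z$ (in particular $I_{p,0}=[0,\frac{1}{2\beta(|p|)})\cup(1-\frac{1}{2\beta(|p|)},1]$). Since $\|D_{p,\tau}\|_{L^2([0,1])}=1$, the part of the $L^2$-norm of $D_{p,\tau}$ outside $I_{p,\tau}$ is correspondingly small.
   Context: The functions $D_{p,\tau}$ are 1-periodic. Define $\nu,\beta$ on $\mathbb N$ by $\nu(0)=0,\ \beta(0)=1$; $\nu(1)=1,\ \beta(1)=1$; for $p\ge 2$, $\nu(p)=2^{p-1}+2^{p-2}$, $\beta(p)=2^{p-1}$; set $\nu(-p)=-\nu(p)$, $\beta(-p)=\beta(p)$. The DOST functions are: $D_{0,0}(t)=1$; $D_{1,0}(t)=e^{2\pi i t}$; for $p\ge 2$, $\tau=0,\dots,\beta(p)-1$, $D_{p,\tau}(t)=\beta(p)^{-1/2}\sum_{j=0}^{\beta(p)-1}e^{2\pi i(\beta(p)+j)(t-\tau/\beta(p))}$; and for $p<0$, $D_{p,\tau}=\overline{D_{-p,\tau}}$. *)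

theory Defs
  imports "HOL-Analysis.Analysis"
begin

fun dost_beta :: "nat \<Rightarrow> nat" where
  "dost_beta 0 = 1"
| "dost_beta (Suc 0) = 1"
| "dost_beta p = 2 ^ (p - 1)"

fun dost_nu_nat :: "nat \<Rightarrow> nat" where
  "dost_nu_nat 0 = 0"
| "dost_nu_nat (Suc 0) = 1"
| "dost_nu_nat p = 2 ^ (p - 1) + 2 ^ (p - 2)"

definition dost_nu :: "int \<Rightarrow> int" where
  "dost_nu p = (if p \<ge> 0 then int (dost_nu_nat (nat p)) else - int (dost_nu_nat (nat (- p))))"

definition beta_int :: "int \<Rightarrow> nat" where
  "beta_int p = dost_beta (nat \<bar>p\<bar>)"

fun dost_pos :: "nat \<Rightarrow> nat \<Rightarrow> real \<Rightarrow> complex" where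
  "dost_pos 0 \<tau> t = 1"
| "dost_pos (Suc 0) \<tau> t = exp (2 * pi * \<i> * complex_of_real t)"
| "dost_pos p \<tau> t =
     (let b = dost_beta p in
      complex_of_real (1 / sqrt (real b)) *
        (\<Sum>j<b. exp (2 * pi * \<i> * of_nat (b + j) *
                     complex_of_real (t - real \<tau> / real b))))"

definition DOST :: "int \<Rightarrow> nat \<Rightarrow> real \<Rightarrow> complex" where
  "DOST p \<tau> t = (if p \<ge> 0 then dost_pos (nat p) \<tau> t else cnj (dost_pos (nat (- p)) \<tau> t))"

end

theory Submission imports Defs "HOL-Analysis.Analysis" begin

lemma cos_lb: "cos (x::real) \<ge> 1 - x^2/2"
proof -
  have "cos x = 1 - 2 * sin (x/2)^2" using cos_double_sin[of "x/2"] by simp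
  moreover have "sin (x/2)^2 \<le> (x/2)^2"
    using abs_sin_x_le_abs_x[of "x/2"] by (metis abs_ge_zero power2_abs power_mono)
  ultimately show ?thesis by (simp add: power_divide)
qed

lemma sum_j: "(\<Sum>j<b. real j) = real b * (real b - 1) / 2"
  by (induction b) (auto simp: field_simps)

lemma sum_j2: "(\<Sum>j<b. (real j)^2) = real b * (real b - 1) * (2 * real b - 1) / 6"
  by (induction b) (auto simp: field_simps power2_eq_square)

lemma sum_c2: "(\<Sum>j<b. (real j - (real b - 1)/2)^2) = real b * ((real b)^2 - 1) / 12"
proof -
  define m where "m = (real b - 1)/2"
  have "(\<Sum>j<b. (real j - m)^2) = (\<Sum>j<b. (real j)^2 - 2*m*real j + m^2)"
    by (rule sum.cong) (auto simp: power2_diff algebra_simps)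
  also have "\<dots> = (\<Sum>j<b. (real j)^2) - 2*m*(\<Sum>j<b. real j) + real b * m^2"
    by (simp add: sum.distrib sum_subtractf sum_distrib_left)
  also have "\<dots> = real b * ((real b)^2 - 1) / 12"
    unfolding sum_j sum_j2 m_def by (simp add: field_simps power2_eq_square)
  finally show ?thesis unfolding m_def .
qed

lemma key:
  fixes b :: nat and s :: real
  shows "(cmod (\<Sum>j<b. exp (2 * pi * \<i> * of_nat (b + j) * complex_of_real s)))^2
         \<ge> (real b)^2 - pi^2 * s^2 * (real b)^4 / 3"
proof -
  define c where "c j = real j - (real b - 1)/2" for j
  define w where "w = exp (- (2 * pi * \<i> * complex_of_real ((real b + (real b - 1)/2) * s)))"
  define A where "A = (\<Sum>j<b. cos (2 * pi * c j * s))"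
  have wn: "cmod w = 1" unfolding w_def by (simp add: norm_exp_eq_Re)
  have "w * (\<Sum>j<b. exp (2 * pi * \<i> * of_nat (b + j) * complex_of_real s))
      = (\<Sum>j<b. exp (\<i> * complex_of_real (2 * pi * c j * s)))"
    unfolding sum_distrib_left
  proof (rule sum.cong[OF refl])
    fix j assume "j \<in> {..<b}"
    have "w * exp (2 * pi * \<i> * of_nat (b + j) * complex_of_real s)
       = exp (- (2 * pi * \<i> * complex_of_real ((real b + (real b - 1)/2) * s)) + 2 * pi * \<i> * of_nat (b + j) * complex_of_real s)"
      unfolding w_def by (rule exp_add[symmetric])
    also have "- (2 * pi * \<i> * complex_of_real ((real b + (real b - 1)/2) * s)) + 2 * pi * \<i> * of_nat (b + j) * complex_of_real s
       = \<i> * complex_of_real (2 * pi * c j * s)"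
      unfolding c_def by (simp add: algebra_simps)
    finally show "w * exp (2 * pi * \<i> * of_nat (b + j) * complex_of_real s) = exp (\<i> * complex_of_real (2 * pi * c j * s))" .
  qed
  hence "Re (w * (\<Sum>j<b. exp (2 * pi * \<i> * of_nat (b + j) * complex_of_real s))) = A"
    unfolding A_def by (simp add: Re_exp)
  moreover have "Re (w * (\<Sum>j<b. exp (2 * pi * \<i> * of_nat (b + j) * complex_of_real s)))
      \<le> cmod (\<Sum>j<b. exp (2 * pi * \<i> * of_nat (b + j) * complex_of_real s))"
    using complex_Re_le_cmod[of "w * (\<Sum>j<b. exp (2 * pi * \<i> * of_nat (b + j) * complex_of_real s))"]
    by (simp add: norm_mult wn)
  ultimately have AM: "A \<le> cmod (\<Sum>j<b. exp (2 * pi * \<i> * of_nat (b + j) * complex_of_real s))" by simp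
  have "A \<ge> (\<Sum>j<b. 1 - (2 * pi * c j * s)^2/2)"
    unfolding A_def by (rule sum_mono) (rule cos_lb)
  also have "(\<Sum>j<b. 1 - (2 * pi * c j * s)^2/2) = real b - 2 * pi^2 * s^2 * (\<Sum>j<b. (c j)^2)"
  proof -
    have "(\<Sum>j<b. 1 - (2 * pi * c j * s)^2/2) = (\<Sum>j<b. 1 - 2 * pi^2 * s^2 * (c j)^2)"
      by (rule sum.cong) (auto simp: power_mult_distrib)
    thus ?thesis by (simp add: sum_subtractf sum_distrib_left)
  qed
  also have "\<dots> = real b - pi^2 * s^2 * real b * ((real b)^2 - 1) / 6"
    unfolding c_def sum_c2 by simp
  finally have Alb: "A \<ge> real b - pi^2 * s^2 * real b * ((real b)^2 - 1) / 6" .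
  define M where "M = cmod (\<Sum>j<b. exp (2 * pi * \<i> * of_nat (b + j) * complex_of_real s))"
  have "M^2 \<ge> 2 * real b * M - (real b)^2"
  proof -
    have "0 \<le> (M - real b)^2" by simp
    thus ?thesis unfolding power2_diff by (simp add: mult.commute mult.left_commute)
  qed
  moreover have "2 * real b * M \<ge> 2 * real b * A" using AM unfolding M_def by (intro mult_left_mono) auto
  moreover have "2 * real b * A \<ge> 2 * real b * (real b - pi^2 * s^2 * real b * ((real b)^2 - 1) / 6)"
    using Alb by (intro mult_left_mono) auto
  moreover have "2 * real b * (real b - pi^2 * s^2 * real b * ((real b)^2 - 1) / 6)
      = 2 * (real b)^2 - pi^2 * s^2 * (real b)^2 * ((real b)^2 - 1) / 3"
    by (simp add: power2_eq_square field_simps)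
  moreover have "pi^2 * s^2 * (real b)^2 * ((real b)^2 - 1) \<le> pi^2 * s^2 * (real b)^4"
  proof -
    have "(real b)^2 * ((real b)^2 - 1) \<le> (real b)^4" by (simp add: power4_eq_xxxx power2_eq_square right_diff_distrib)
    thus ?thesis using mult_left_mono[of _ _ "pi^2 * s^2"] by (simp add: mult.assoc)
  qed
  ultimately show ?thesis unfolding M_def[symmetric] by linarith
qed

lemma dost_pos_ge2:
  assumes "n \<ge> 2"
  shows "dost_pos n \<tau> t = complex_of_real (1 / sqrt (real (dost_beta n))) *
        (\<Sum>j<dost_beta n. exp (2 * pi * \<i> * of_nat (dost_beta n + j) *
                     complex_of_real (t - real \<tau> / real (dost_beta n))))"
proof -
  obtain m where "n = Suc (Suc m)" using assms by (metis add_2_eq_Suc le_Suc_ex)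
  thus ?thesis by (simp add: Let_def)
qed

lemma dost_pos_cont: "continuous_on UNIV (dost_pos n \<tau>)"
proof (cases "n \<ge> 2")
  case True
  show ?thesis
    by (subst dost_pos_ge2[OF True, abs_def]) (intro continuous_intros)
next
  case False
  hence "n = 0 \<or> n = 1" by auto
  thus ?thesis by (auto intro!: continuous_intros)
qed

lemma DOST_norm: "cmod (DOST p \<tau> t) = cmod (dost_pos (nat \<bar>p\<bar>) \<tau> t)"
  unfolding DOST_def by auto

lemma DOST_cont: "continuous_on UNIV (\<lambda>t. (cmod (DOST p \<tau> t))\<^sup>2)"
  unfolding DOST_norm
  by (intro continuous_intros continuous_on_compose2[OF dost_pos_cont]) auto

lemma beta_pos: "dost_beta n > 0"
  by (induction n rule: dost_beta.induct) auto

lemma pointwise: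
  assumes "\<tau> < beta_int p"
  shows "(cmod (DOST p \<tau> t))\<^sup>2 \<ge> real (beta_int p) - pi^2 * real (beta_int p)^3 * (t - real \<tau> / real (beta_int p))^2 / 3"
proof -
  define n where "n = nat \<bar>p\<bar>"
  define b where "b = dost_beta n"
  have bb: "beta_int p = b" unfolding b_def n_def beta_int_def ..
  show ?thesis
  proof (cases "n \<ge> 2")
    case False
    hence "n = 0 \<or> n = 1" by auto
    hence "b = 1" "cmod (DOST p \<tau> t) = 1" unfolding b_def DOST_norm n_def[symmetric] by auto
    thus ?thesis unfolding bb by simp
  next
    case True
    define s where "s = t - real \<tau> / real b"
    define S where "S = (\<Sum>j<b. exp (2 * pi * \<i> * of_nat (b + j) * complex_of_real s))"
    have bpos: "real b > 0" unfolding b_def using beta_pos by simp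
    have "DOST p \<tau> t = complex_of_real (1 / sqrt (real b)) * S"
      if "p \<ge> 0" using that True unfolding DOST_def S_def s_def b_def n_def
      by (simp add: dost_pos_ge2)
    have "cmod (DOST p \<tau> t) = cmod (complex_of_real (1 / sqrt (real b)) * S)"
      unfolding DOST_norm n_def[symmetric] S_def s_def b_def using dost_pos_ge2[OF True] by simp
    also have "\<dots> = cmod S / sqrt (real b)" using bpos by (simp add: norm_divide)
    finally have "(cmod (DOST p \<tau> t))\<^sup>2 = (cmod S)^2 / real b"
      using bpos by (simp add: power_divide)
    also have "\<dots> \<ge> ((real b)^2 - pi^2 * s^2 * (real b)^4 / 3) / real b"
      using key[of b s] bpos unfolding S_def by (simp add: divide_right_mono)
    moreover have "((real b)^2 - pi^2 * s^2 * (real b)^4 / 3) / real b = real b - pi^2 * real b^3 * s^2 / 3"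
      using bpos by (simp add: field_simps power2_eq_square power3_eq_cube power4_eq_xxxx)
    ultimately show ?thesis unfolding bb s_def by simp
  qed
qed

lemma integral_g:
  fixes b c :: real
  assumes "b > 0"
  shows "((\<lambda>t. b - pi^2 * b^3 * (t - c)^2 / 3) has_integral (1 - pi^2/36)) {c - 1/(2*b) .. c + 1/(2*b)}"
proof -
  define G where "G t = b * t - pi^2 * b^3 * (t - c)^3 / 9" for t
  have "((\<lambda>t. b - pi^2 * b^3 * (t - c)^2 / 3) has_integral (G (c + 1/(2*b)) - G (c - 1/(2*b)))) {c - 1/(2*b) .. c + 1/(2*b)}"
  proof (rule fundamental_theorem_of_calculus)
    show "c - 1/(2*b) \<le> c + 1/(2*b)" using assms by simp
    fix x assume "x \<in> {c - 1/(2*b) .. c + 1/(2*b)}"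
    show "(G has_vector_derivative (b - pi^2 * b^3 * (x - c)^2 / 3)) (at x within {c - 1/(2*b) .. c + 1/(2*b)})"
      unfolding G_def has_real_derivative_iff_has_vector_derivative[symmetric]
      by (rule derivative_eq_intros refl | simp add: power2_eq_square field_simps)+
  qed
  moreover have "G (c + 1/(2*b)) - G (c - 1/(2*b)) = 1 - pi^2/36"
    unfolding G_def using assms by (simp add: power3_eq_cube field_simps)
  ultimately show ?thesis by simp
qed

theorem proposition3p4:
  fixes p :: int and \<tau> :: nat
  assumes "\<tau> < beta_int p"
  shows "sqrt (integral {real \<tau> / real (beta_int p) - 1 / (2 * real (beta_int p)) ..
                        real \<tau> / real (beta_int p) + 1 / (2 * real (beta_int p))}
                (\<lambda>t. (cmod (DOST p \<tau> t))\<^sup>2)) > 85 / 100"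
proof -
  define b where "b = real (beta_int p)"
  define c where "c = real \<tau> / b"
  have bpos: "b > 0" unfolding b_def beta_int_def using beta_pos by simp
  have int: "(\<lambda>t. (cmod (DOST p \<tau> t))\<^sup>2) integrable_on {c - 1/(2*b) .. c + 1/(2*b)}"
    by (rule integrable_continuous_interval) (rule continuous_on_subset[OF DOST_cont], simp)
  have "1 - pi^2/36 \<le> integral {c - 1/(2*b) .. c + 1/(2*b)} (\<lambda>t. (cmod (DOST p \<tau> t))\<^sup>2)"
    using integral_g[OF bpos, of c] int pointwise[OF assms]
    unfolding b_def c_def
    by (intro has_integral_le[OF integral_g[OF bpos[unfolded b_def]] integrable_integral[OF int[unfolded b_def c_def]]]) auto
  moreover have "(85/100)^2 < 1 - pi^2/36"
  proof -
    have "pi \<le> 3.1415926535899" by (rule pi_approx(2))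
    hence h: "pi^2 \<le> 3.1415926535899^2" using pi_gt_zero by (intro power_mono) auto
    have h2: "pi^2 < 987/100" by (rule le_less_trans[OF h]) (simp add: power2_eq_square)
    have e: "(85/100::real)^2 = 7225/10000" by (simp add: power2_eq_square)
    show ?thesis unfolding e using h2 by linarith
  qed
  ultimately show ?thesis unfolding b_def[symmetric] c_def[symmetric]
    by (intro real_less_rsqrt) simp
qed

end
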